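(* For every theory $\Sigma$ and formula $A \Rightarrow B$: $\Sigma \vdash A \Rightarrow B$ if and only if there is a finite $\Sigma' \subseteq \Sigma^{\mathrm{PL}}$ such that $\Sigma' \vdash_\mathcal{R} A \Rightarrow B$, where $\mathcal{R}$ is the deduction system consisting of (Ax) and (Cut).
   Context: $Y$ is a non-empty finite set of attributes and $\mathcal{T}_Y = \{y^i \mid y \in Y, i \in \mathbb{Z}\}$; $M + j = \{y^{i+j} \mid y^i \in M\}$. A formula is $A \Rightarrow B$ with $A,B$ finite subsets of $\mathcal{T}_Y$; a theory is a set of formulas; $\Sigma^{\mathrm{PL}} = \{A+i \Rightarrow B+i \mid A \Rightarrow B \in \Sigma, i \in \mathbb{Z}\}$. Deduction rules (for arbitrary finite $A,B,C,D \subseteq \mathcal{T}_Y$, $i \in \mathbb{Z}$): (Ax) infer $A \cup B \Rightarrow A$; (Cut) from $A \Rightarrow B$ and $B \cup C \Rightarrow D$ infer $A \cup C \Rightarrow D$; (Shf) from $A \Rightarrow B$ infer $A+i \Rightarrow B+i$. For a set of rules $\mathcal{R}$, an $\mathcal{R}$-proof of $A \Rightarrow B$ by $\Sigma$ is a finite sequence of formulas ending with $A \Rightarrow B$ in which each member is in $\Sigma$ or is the conclusion of a rule in $\mathcal{R}$ whose hypotheses occur earlier; $\Sigma \vdash_\mathcal{R} A \Rightarrow B$ means such a proof exists, and $\Sigma \vdash A \Rightarrow B$ denotes $\vdash_\mathcal{R}$ for $\mathcal{R}$ = \{(Ax), (Cut), (Shf)\}. *)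

theory Defs
  imports Main
begin

text \<open>Temporal attributes y^i are pairs (y, i); formulas A \<Rightarrow> B are pairs (A, B)
  of finite sets of temporal attributes.\<close>

type_synonym 'y tattr = "'y \<times> int"
type_synonym 'y fml = "'y tattr set \<times> 'y tattr set"

definition shift :: "'y tattr set \<Rightarrow> int \<Rightarrow> 'y tattr set" where
  "shift M j = (\<lambda>(y, i). (y, i + j)) ` M"

definition is_formula :: "'y fml \<Rightarrow> bool" where
  "is_formula f \<longleftrightarrow> finite (fst f) \<and> finite (snd f)"

definition PL :: "'y fml set \<Rightarrow> 'y fml set" where
  "PL \<Sigma> = {(shift A i, shift B i) | A B i. (A, B) \<in> \<Sigma>}"

datatype rule = Ax | Cut | Shf

definition rule_concl :: "rule \<Rightarrow> 'y fml set \<Rightarrow> 'y fml \<Rightarrow> bool" where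
  "rule_concl r H f \<longleftrightarrow>
    (case r of
      Ax \<Rightarrow> (\<exists>A B. finite A \<and> finite B \<and> f = (A \<union> B, A))
    | Cut \<Rightarrow> (\<exists>A B C D. finite A \<and> finite B \<and> finite C \<and> finite D \<and>
               (A, B) \<in> H \<and> (B \<union> C, D) \<in> H \<and> f = (A \<union> C, D))
    | Shf \<Rightarrow> (\<exists>A B i. finite A \<and> finite B \<and> (A, B) \<in> H \<and> f = (shift A i, shift B i)))"

definition is_proof :: "rule set \<Rightarrow> 'y fml set \<Rightarrow> 'y fml list \<Rightarrow> bool" where
  "is_proof R \<Sigma> ps \<longleftrightarrow>
    (\<forall>k < length ps. ps ! k \<in> \<Sigma> \<or>
       (\<exists>r \<in> R. rule_concl r (set (take k ps)) (ps ! k)))"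

definition derivable :: "rule set \<Rightarrow> 'y fml set \<Rightarrow> 'y fml \<Rightarrow> bool" where
  "derivable R \<Sigma> f \<longleftrightarrow> (\<exists>ps. ps \<noteq> [] \<and> is_proof R \<Sigma> ps \<and> last ps = f)"

definition theory_of :: "'y fml set \<Rightarrow> bool" where
  "theory_of \<Sigma> \<longleftrightarrow> (\<forall>f \<in> \<Sigma>. is_formula f)"

end

theory Submission
  imports Defs
begin

inductive der :: "rule set \<Rightarrow> 'y fml set \<Rightarrow> 'y fml \<Rightarrow> bool" for R \<Sigma> where
  base: "f \<in> \<Sigma> \<Longrightarrow> der R \<Sigma> f"
| ax: "Ax \<in> R \<Longrightarrow> finite A \<Longrightarrow> finite B \<Longrightarrow> der R \<Sigma> (A \<union> B, A)"
| cut: "Cut \<in> R \<Longrightarrow> finite A \<Longrightarrow> finite B \<Longrightarrow> finite C \<Longrightarrow> finite D \<Longrightarrow>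
        der R \<Sigma> (A, B) \<Longrightarrow> der R \<Sigma> (B \<union> C, D) \<Longrightarrow> der R \<Sigma> (A \<union> C, D)"
| shf: "Shf \<in> R \<Longrightarrow> finite A \<Longrightarrow> finite B \<Longrightarrow> der R \<Sigma> (A, B) \<Longrightarrow>
        der R \<Sigma> (shift A i, shift B i)"

lemma rule_concl_mono: assumes "H \<subseteq> H'" "rule_concl r H f" shows "rule_concl r H' f"
proof (cases r)
  case Ax then show ?thesis using assms(2) by (simp add: rule_concl_def)
next
  case Cut
  note h = assms
  from h(2) Cut obtain A B C D where "finite A" "finite B" "finite C" "finite D"
    "(A, B) \<in> H" "(B \<union> C, D) \<in> H" "f = (A \<union> C, D)" by (auto simp: rule_concl_def)
  then show ?thesis using Cut h(1) unfolding rule_concl_def by auto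
next
  case Shf
  note h = assms
  from h(2) Shf obtain A B i where "finite A" "finite B"
    "(A, B) \<in> H" "f = (shift A i, shift B i)" by (auto simp: rule_concl_def)
  then show ?thesis using Shf h(1) unfolding rule_concl_def by auto
qed

lemma rc_Ax: "rule_concl Ax H f \<longleftrightarrow> (\<exists>A B. finite A \<and> finite B \<and> f = (A \<union> B, A))"
  by (simp add: rule_concl_def)
lemma rc_Cut: "rule_concl Cut H f \<longleftrightarrow> (\<exists>A B C D. finite A \<and> finite B \<and> finite C \<and> finite D \<and>
               (A, B) \<in> H \<and> (B \<union> C, D) \<in> H \<and> f = (A \<union> C, D))"
  by (simp add: rule_concl_def)
lemma rc_Shf: "rule_concl Shf H f \<longleftrightarrow> (\<exists>A B i. finite A \<and> finite B \<and> (A, B) \<in> H \<and> f = (shift A i, shift B i))"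
  by (simp add: rule_concl_def)

lemma proof_der:
  assumes "is_proof R \<Sigma> ps"
  shows "k < length ps \<Longrightarrow> der R \<Sigma> (ps ! k)"
proof (induction k rule: less_induct)
  case (less k)
  have IH: "der R \<Sigma> g" if g: "g \<in> set (take k ps)" for g
  proof -
    from g obtain j where j: "j < length (take k ps)" "take k ps ! j = g"
      by (metis in_set_conv_nth)
    then have "j < k" "j < length ps" by simp_all
    moreover have "g = ps ! j" using j by simp
    ultimately show "der R \<Sigma> g" using less.IH by blast
  qed
  from assms less.prems have "ps ! k \<in> \<Sigma> \<or> (\<exists>r \<in> R. rule_concl r (set (take k ps)) (ps ! k))"
    unfolding is_proof_def by blast
  then show ?case
  proof
    assume "ps ! k \<in> \<Sigma>" then show ?thesis by (rule der.base)
  next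
    assume "\<exists>r \<in> R. rule_concl r (set (take k ps)) (ps ! k)"
    then obtain r where r: "r \<in> R" "rule_concl r (set (take k ps)) (ps ! k)" by blast
    show ?thesis
    proof (cases r)
      case Ax
      then obtain A B where c: "finite A" "finite B" "ps ! k = (A \<union> B, A)"
        using r(2)[unfolded Ax rc_Ax] by blast
      show ?thesis unfolding c(3) by (rule der.ax) (use c r(1) Ax in auto)
    next
      case Cut
      then obtain A B C D where c: "finite A" "finite B" "finite C" "finite D"
        "(A, B) \<in> set (take k ps)" "(B \<union> C, D) \<in> set (take k ps)" "ps ! k = (A \<union> C, D)"
        using r(2)[unfolded Cut rc_Cut] by blast
      show ?thesis unfolding c(7) by (rule der.cut[where B=B]) (use c IH r(1) Cut in auto)
    next
      case Shf
      then obtain A B i where c: "finite A" "finite B"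
        "(A, B) \<in> set (take k ps)" "ps ! k = (shift A i, shift B i)"
        using r(2)[unfolded Shf rc_Shf] by blast
      show ?thesis unfolding c(4) by (rule der.shf) (use c IH r(1) Shf in auto)
    qed
  qed
qed

lemma is_proof_append:
  assumes "is_proof R \<Sigma> ps" "is_proof R \<Sigma> qs"
  shows "is_proof R \<Sigma> (ps @ qs)"
  unfolding is_proof_def
proof (intro allI impI)
  fix k assume k: "k < length (ps @ qs)"
  show "(ps @ qs) ! k \<in> \<Sigma> \<or> (\<exists>r\<in>R. rule_concl r (set (take k (ps @ qs))) ((ps @ qs) ! k))"
  proof (cases "k < length ps")
    case True
    then show ?thesis using assms(1) by (auto simp: is_proof_def nth_append)
  next
    case False
    define j where "j = k - length ps"
    have j: "j < length qs" using k False by (simp add: j_def)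
    have e: "(ps @ qs) ! k = qs ! j" using False by (simp add: nth_append j_def)
    have t: "set (take j qs) \<subseteq> set (take k (ps @ qs))" using False by (simp add: j_def)
    from assms(2) j have "qs ! j \<in> \<Sigma> \<or> (\<exists>r\<in>R. rule_concl r (set (take j qs)) (qs ! j))"
      by (auto simp: is_proof_def)
    then show ?thesis using e t rule_concl_mono by metis
  qed
qed

lemma is_proof_single:
  assumes "f \<in> \<Sigma> \<or> (\<exists>r\<in>R. rule_concl r {} f)"
  shows "is_proof R \<Sigma> [f]"
  using assms by (auto simp: is_proof_def)

lemma is_proof_snoc:
  assumes "is_proof R \<Sigma> ps" "\<exists>r\<in>R. rule_concl r (set ps) f"
  shows "is_proof R \<Sigma> (ps @ [f])"
  unfolding is_proof_def
proof (intro allI impI)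
  fix k assume k: "k < length (ps @ [f])"
  show "(ps @ [f]) ! k \<in> \<Sigma> \<or> (\<exists>r\<in>R. rule_concl r (set (take k (ps @ [f]))) ((ps @ [f]) ! k))"
  proof (cases "k < length ps")
    case True
    then show ?thesis using assms(1) by (simp add: is_proof_def nth_append)
  next
    case False
    then have "k = length ps" using k by simp
    then show ?thesis using assms(2) by simp
  qed
qed

lemma der_proof: "der R \<Sigma> f \<Longrightarrow> \<exists>ps. ps \<noteq> [] \<and> is_proof R \<Sigma> ps \<and> last ps = f"
proof (induction rule: der.induct)
  case (base f)
  then show ?case using is_proof_single[of f \<Sigma>] by (intro exI[of _ "[f]"]) auto
next
  case (ax A B)
  have "rule_concl Ax {} (A \<union> B, A)" using ax unfolding rc_Ax by blast
  then show ?case using ax is_proof_single[of "(A \<union> B, A)" \<Sigma> R] by (intro exI[of _ "[(A \<union> B, A)]"]) auto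
next
  case (cut A B C D)
  then obtain ps qs where p: "ps \<noteq> []" "is_proof R \<Sigma> ps" "last ps = (A, B)"
    "qs \<noteq> []" "is_proof R \<Sigma> qs" "last qs = (B \<union> C, D)" by blast
  have "rule_concl Cut (set (ps @ qs)) (A \<union> C, D)"
  proof -
    have "(A, B) \<in> set (ps @ qs)" "(B \<union> C, D) \<in> set (ps @ qs)"
      using p by (metis Un_iff last_in_set set_append)+
    then show ?thesis unfolding rc_Cut using cut by blast
  qed
  then have "is_proof R \<Sigma> ((ps @ qs) @ [(A \<union> C, D)])"
    using is_proof_snoc is_proof_append p cut by blast
  then show ?case by (intro exI[of _ "(ps @ qs) @ [(A \<union> C, D)]"]) auto
next
  case (shf A B i)
  then obtain ps where p: "ps \<noteq> []" "is_proof R \<Sigma> ps" "last ps = (A, B)" by blast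
  have "rule_concl Shf (set ps) (shift A i, shift B i)"
  proof -
    have "(A, B) \<in> set ps" using p by (metis last_in_set)
    then show ?thesis unfolding rc_Shf using shf by blast
  qed
  then have "is_proof R \<Sigma> (ps @ [(shift A i, shift B i)])"
    using is_proof_snoc p shf by blast
  then show ?case by (intro exI[of _ "ps @ [(shift A i, shift B i)]"]) auto
qed

lemma derivable_der: "derivable R \<Sigma> f \<longleftrightarrow> der R \<Sigma> f"
proof
  assume "derivable R \<Sigma> f"
  then obtain ps where p: "ps \<noteq> []" "is_proof R \<Sigma> ps" "last ps = f"
    unfolding derivable_def by blast
  have "der R \<Sigma> (ps ! (length ps - 1))"
    using p by (intro proof_der) auto
  then show "der R \<Sigma> f" using p by (simp add: last_conv_nth)
next
  assume "der R \<Sigma> f"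
  then show "derivable R \<Sigma> f" unfolding derivable_def by (rule der_proof)
qed

lemma der_mono: "der R \<Sigma> f \<Longrightarrow> R \<subseteq> R2 \<Longrightarrow> \<Sigma> \<subseteq> \<Sigma>2 \<Longrightarrow> der R2 \<Sigma>2 f"
proof (induction rule: der.induct)
  case (base f) show ?case apply (rule der.base) using base by blast
next
  case (ax A B) show ?case apply (rule der.ax) using ax by blast+
next
  case (cut A B C D) show ?case apply (rule der.cut[where B=B]) using cut by blast+
next
  case (shf A B i) show ?case apply (rule der.shf) using shf by blast+
qed

lemma shift_Un: "shift (A \<union> B) i = shift A i \<union> shift B i"
  by (simp add: shift_def image_Un)
lemma shift_shift: "shift (shift A j) i = shift A (j + i)"
  unfolding shift_def image_image by (simp add: split_beta add.assoc)
lemma shift_0: "shift A 0 = A"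
  unfolding shift_def by (simp add: split_beta)
lemma finite_shift: "finite A \<Longrightarrow> finite (shift A i)"
  by (simp add: shift_def)

lemma main_dir:
  "der R \<Sigma> f \<Longrightarrow> \<forall>i. \<exists>\<Sigma>'. finite \<Sigma>' \<and> \<Sigma>' \<subseteq> PL \<Sigma> \<and>
      der {Ax, Cut} \<Sigma>' (shift (fst f) i, shift (snd f) i)"
proof (induction rule: der.induct)
  case (base f)
  show ?case
  proof
    fix i
    have "(shift (fst f) i, shift (snd f) i) \<in> PL \<Sigma>"
    proof -
      obtain a b where f: "f = (a, b)" by (cases f)
      then have "(a, b) \<in> \<Sigma>" using base by simp
      then show ?thesis unfolding PL_def f by auto
    qed
    then show "\<exists>\<Sigma>'. finite \<Sigma>' \<and> \<Sigma>' \<subseteq> PL \<Sigma> \<and>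
      der {Ax, Cut} \<Sigma>' (shift (fst f) i, shift (snd f) i)"
    proof (intro exI conjI)
      show "der {Ax, Cut} {(shift (fst f) i, shift (snd f) i)} (shift (fst f) i, shift (snd f) i)"
        by (rule der.base) simp
    qed (use \<open>(shift (fst f) i, shift (snd f) i) \<in> PL \<Sigma>\<close> in auto)
  qed
next
  case (ax A B)
  show ?case
  proof
    fix i
    have "der {Ax, Cut} {} (shift A i \<union> shift B i, shift A i)"
      by (rule der.ax) (use ax in \<open>simp_all add: finite_shift\<close>)
    then show "\<exists>\<Sigma>'. finite \<Sigma>' \<and> \<Sigma>' \<subseteq> PL \<Sigma> \<and>
      der {Ax, Cut} \<Sigma>' (shift (fst (A \<union> B, A)) i, shift (snd (A \<union> B, A)) i)"
      by (intro exI[of _ "{}"]) (simp add: shift_Un)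
  qed
next
  case (cut A B C D)
  show ?case
  proof
    fix i
    from spec[OF cut.IH(1), of i] obtain S1 where S1: "finite S1" "S1 \<subseteq> PL \<Sigma>"
      "der {Ax, Cut} S1 (shift A i, shift B i)" by (simp only: fst_conv snd_conv) blast
    from spec[OF cut.IH(2), of i] obtain S2 where S2: "finite S2" "S2 \<subseteq> PL \<Sigma>"
      "der {Ax, Cut} S2 (shift (B \<union> C) i, shift D i)" by (simp only: fst_conv snd_conv) blast
    have d1: "der {Ax, Cut} (S1 \<union> S2) (shift A i, shift B i)"
      by (rule der_mono[OF S1(3)]) simp_all
    have d2': "der {Ax, Cut} (S1 \<union> S2) (shift (B \<union> C) i, shift D i)"
      by (rule der_mono[OF S2(3)]) simp_all
    have d2: "der {Ax, Cut} (S1 \<union> S2) (shift B i \<union> shift C i, shift D i)"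
      using d2' by (simp only: shift_Un)
    have "der {Ax, Cut} (S1 \<union> S2) (shift A i \<union> shift C i, shift D i)"
      by (rule der.cut[OF _ _ _ _ _ d1 d2]) (simp_all add: finite_shift cut.hyps)
    then have "der {Ax, Cut} (S1 \<union> S2) (shift (fst (A \<union> C, D)) i, shift (snd (A \<union> C, D)) i)"
      by (simp only: fst_conv snd_conv shift_Un)
    moreover have "finite (S1 \<union> S2)" "S1 \<union> S2 \<subseteq> PL \<Sigma>" using S1 S2 by simp_all
    ultimately show "\<exists>\<Sigma>'. finite \<Sigma>' \<and> \<Sigma>' \<subseteq> PL \<Sigma> \<and>
      der {Ax, Cut} \<Sigma>' (shift (fst (A \<union> C, D)) i, shift (snd (A \<union> C, D)) i)"
      by blast
  qed
next
  case (shf A B j)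
  show ?case
  proof
    fix i
    obtain S where "finite S" "S \<subseteq> PL \<Sigma>" "der {Ax, Cut} S (shift A (j + i), shift B (j + i))"
      using spec[OF shf.IH, of "j + i"] by simp blast
    then show "\<exists>\<Sigma>'. finite \<Sigma>' \<and> \<Sigma>' \<subseteq> PL \<Sigma> \<and>
      der {Ax, Cut} \<Sigma>' (shift (fst (shift A j, shift B j)) i, shift (snd (shift A j, shift B j)) i)"
      by (intro exI[of _ S]) (simp add: shift_shift)
  qed
qed

lemma back_dir:
  assumes th: "theory_of \<Sigma>"
  shows "der R \<Sigma>' f \<Longrightarrow> \<Sigma>' \<subseteq> PL \<Sigma> \<Longrightarrow> R \<subseteq> {Ax, Cut} \<Longrightarrow> der {Ax, Cut, Shf} \<Sigma> f"
proof (induction rule: der.induct)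
  case (base f)
  then obtain A B i where "f = (shift A i, shift B i)" "(A, B) \<in> \<Sigma>"
    unfolding PL_def by blast
  moreover then have "finite A" "finite B" using th by (auto simp: theory_of_def is_formula_def)
  ultimately show ?case using der.shf[of "{Ax, Cut, Shf}" A B \<Sigma> i] der.base[of "(A, B)" \<Sigma>] by simp
next
  case (ax A B) show ?case apply (rule der.ax) using ax by simp_all
next
  case (cut A B C D) show ?case apply (rule der.cut[where B=B]) using cut by simp_all
next
  case (shf A B i) then show ?case by blast
qed

theorem theorem9:
  fixes \<Sigma> :: "('y::finite) fml set" and A B :: "'y tattr set"
  assumes "theory_of \<Sigma>" and "finite A" and "finite B"
  shows "derivable {Ax, Cut, Shf} \<Sigma> (A, B) \<longleftrightarrow>
         (\<exists>\<Sigma>'. finite \<Sigma>' \<and> \<Sigma>' \<subseteq> PL \<Sigma> \<and> derivable {Ax, Cut} \<Sigma>' (A, B))"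
proof
  assume "derivable {Ax, Cut, Shf} \<Sigma> (A, B)"
  then have "der {Ax, Cut, Shf} \<Sigma> (A, B)" by (simp add: derivable_der)
  from main_dir[OF this, rule_format, of 0] obtain S where
    "finite S" "S \<subseteq> PL \<Sigma>" "der {Ax, Cut} S (A, B)" by (auto simp: shift_0)
  then show "\<exists>\<Sigma>'. finite \<Sigma>' \<and> \<Sigma>' \<subseteq> PL \<Sigma> \<and> derivable {Ax, Cut} \<Sigma>' (A, B)"
    by (auto simp: derivable_der)
next
  assume "\<exists>\<Sigma>'. finite \<Sigma>' \<and> \<Sigma>' \<subseteq> PL \<Sigma> \<and> derivable {Ax, Cut} \<Sigma>' (A, B)"
  then obtain S where "S \<subseteq> PL \<Sigma>" "der {Ax, Cut} S (A, B)" by (auto simp: derivable_der)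
  then have "der {Ax, Cut, Shf} \<Sigma> (A, B)" using back_dir[OF assms(1)] by blast
  then show "derivable {Ax, Cut, Shf} \<Sigma> (A, B)" by (simp add: derivable_der)
qed

end
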